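(* Let $n \geq 1$ and let $B$ be a log-product expression with $L(B) \subseteq P_n$. Then $|L(B)|\leq n! \cdot 4^{1-n} n^{\frac14 [ 3+\log n ]}$.
   Context: $P_n$ is the language of all permutations of the alphabet $\Sigma=\{1,\dots,n\}$, i.e. words of length $n$ in which each letter of $\Sigma$ occurs exactly once. Regular expressions (without star, without $\emptyset$) are built from $\epsilon$ and letters by union and concatenation. A homogeneous expression describes a language all of whose words have the same length, its degree $\deg R$. A homogeneous expression $B$ is log-product if it is a letter, or there are homogeneous expressions $B_1,B_2$ with $B_1$ log-product, $\deg B_1\ge\deg B_2$ and $B=B_1B_2$ or $B=B_2B_1$. Logarithms are base 2. *)

theory Defs
  imports Complex_Main
begin

datatype rexp = Eps | Lit nat | Union rexp rexp | Concat rexp rexp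

fun lang :: "rexp \<Rightarrow> nat list set" where
  "lang Eps = {[]}"
| "lang (Lit a) = {[a]}"
| "lang (Union r s) = lang r \<union> lang s"
| "lang (Concat r s) = {u @ v | u v. u \<in> lang r \<and> v \<in> lang s}"

definition homogeneous :: "rexp \<Rightarrow> bool" where
  "homogeneous r \<longleftrightarrow> (\<forall>u\<in>lang r. \<forall>v\<in>lang r. length u = length v)"

text \<open>Degree: the common length of the words (the language is never empty).\<close>
definition deg :: "rexp \<Rightarrow> nat" where
  "deg r = length (SOME w. w \<in> lang r)"

inductive log_product :: "rexp \<Rightarrow> bool" where
  lit: "log_product (Lit a)"
| left: "\<lbrakk>log_product B1; homogeneous B1; homogeneous B2; deg B1 \<ge> deg B2\<rbrakk>
         \<Longrightarrow> log_product (Concat B1 B2)"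
| right: "\<lbrakk>log_product B1; homogeneous B1; homogeneous B2; deg B1 \<ge> deg B2\<rbrakk>
         \<Longrightarrow> log_product (Concat B2 B1)"

definition perms :: "nat \<Rightarrow> nat list set" where
  "perms n = {w. distinct w \<and> set w = {1..n}}"

end

theory Submission imports Defs "HOL-Analysis.Analysis" "HOL-Combinatorics.Multiset_Permutations" begin

definition hh :: "real \<Rightarrow> real" where
  "hh x = x powr ((3 + log 2 x) / 4)"

definition lh :: "real \<Rightarrow> real" where
  "lh x = (3 * ln x + (ln x)^2 / ln 2) / 4"

lemma hh_exp: "x > 0 \<Longrightarrow> hh x = exp (lh x)"
  unfolding hh_def lh_def powr_def log_def
  by (simp add: power2_eq_square field_simps)

lemma ln_lower2: fixes x :: real assumes "x \<ge> 0" shows "2 * x / (2 + x) \<le> ln (1 + x)"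
proof -
  let ?f = "\<lambda>x::real. ln (1 + x) - 2 * x / (2 + x)"
  have "?f 0 \<le> ?f x"
  proof (rule DERIV_nonneg_imp_nondecreasing[OF assms])
    fix y :: real assume y0: "0 \<le> y" and y1: "y \<le> x"
    have y: "0 \<le> y \<and> y \<le> x" using y0 y1 by simp
    have "DERIV ?f y :> (1 / (1 + y) - 4 / (2 + y)^2)"
      using y by (auto intro!: derivative_eq_intros simp: power2_eq_square field_simps)
    moreover have "1 / (1 + y) - 4 / (2 + y)^2 \<ge> 0"
    proof -
      have "4 * (1 + y) \<le> (2 + y)^2" by (simp add: power2_eq_square algebra_simps)
      then have "4 / (2 + y)^2 \<le> 1 / (1 + y)" using y by (simp add: field_simps)
      then show ?thesis by simp
    qed
    ultimately show "\<exists>d. DERIV ?f y :> d \<and> 0 \<le> d" by blast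
  qed
  then show ?thesis by simp
qed

lemma log2_lower: fixes t :: real assumes "0 \<le> t" "t \<le> 1" shows "t * ln 2 \<le> ln (1 + t)"
proof -
  have "exp ((1 - t) * 0 + t * ln 2) \<le> (1 - t) * exp 0 + t * exp (ln 2)"
    using convex_onD[OF exp_convex, of t 0 "ln 2"] assms by simp
  then have "exp (t * ln 2) \<le> 1 + t" by simp
  then show ?thesis using assms by (subst ln_ge_iff) auto
qed

lemma core_ln:
  fixes K M :: real
  assumes K1: "1 \<le> K" and M0: "0 \<le> M" and MK: "M \<le> K"
  shows "ln (K + M + 2) + lh (K + M) + lh (K + 1) \<le> ln (K + M + 1) + lh (K + M + 2) + lh K"
proof -
  define N where "N = K + M"
  have N1: "1 \<le> N" "N \<le> 2 * K" "K \<le> N" using assms by (auto simp: N_def)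
  define a a1 b b1 b2 L where "a = ln K" "a1 = ln (K + 1)" "b = ln N" "b1 = ln (N + 1)"
     "b2 = ln (N + 2)" "L = ln (2::real)"
  have L0: "L > 0" by (simp add: a_a1_b_b1_b2_L_def)
  define A B where "A = b2 - b" "B = a1 - a"
  have FA: "A = ln ((N + 2) / N)" using N1 by (simp add: A_B_def a_a1_b_b1_b2_L_def ln_div)
  have FB: "B = ln ((K + 1) / K)" using K1 by (simp add: A_B_def a_a1_b_b1_b2_L_def ln_div)
  have "(K + 1) / K \<le> (N + 2) / N" using N1 K1 by (simp add: field_simps)
  then have F1: "B \<le> A" unfolding FA FB using K1 N1 by (subst ln_le_cancel_iff) auto
  have B0: "0 \<le> B" unfolding FB using K1 by simp
  have "a + a1 = ln (K * (K + 1))" using K1 by (simp add: a_a1_b_b1_b2_L_def ln_mult)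
  moreover have "2 \<le> K * (K + 1)" using mult_mono[of 1 K 2 "K+1"] K1 by simp
  ultimately have "L \<le> a + a1" unfolding a_a1_b_b1_b2_L_def by simp
  then have F2: "1 \<le> (a + a1) / L" using L0 by simp
  have E1: "b + b2 - a - a1 = ln ((N * (N + 2)) / (K * (K + 1)))"
    using K1 N1 by (simp add: a_a1_b_b1_b2_L_def ln_mult ln_div)
  have E2: "(1 + M / K)^2 \<le> (N * (N + 2)) / (K * (K + 1))"
  proof -
    have "(1 + M / K)^2 = N^2 / K^2" using K1 by (simp add: N_def field_simps power2_eq_square)
    moreover have "N^2 * (K * (K + 1)) \<le> (N * (N + 2)) * K^2"
    proof -
      have "N * (K + 1) \<le> (N + 2) * K" using N1 by (simp add: algebra_simps)
      then have "N * (N * (K + 1)) * K \<le> N * ((N + 2) * K) * K"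
        using N1 K1 by (intro mult_right_mono mult_left_mono) auto
      then show ?thesis by (simp add: power2_eq_square algebra_simps)
    qed
    moreover have "N^2 / K^2 \<le> (N * (N + 2)) / (K * (K + 1))"
    proof -
      have "N^2 / K^2 = N^2 * (K * (K + 1)) / (K^2 * (K * (K + 1)))" using K1 by simp
      also have "\<dots> \<le> (N * (N + 2)) * K^2 / (K^2 * (K * (K + 1)))"
        by (rule divide_right_mono) (use calculation K1 \<open>N^2 * (K * (K + 1)) \<le> (N * (N + 2)) * K^2\<close> in auto)
      also have "\<dots> = (N * (N + 2)) / (K * (K + 1))" using K1 by simp
      finally show ?thesis .
    qed
    ultimately show ?thesis by simp
  qed
  have "ln ((1 + M / K)^2) \<le> b + b2 - a - a1"
  proof -
    have "0 \<le> M / K" using K1 M0 by simp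
    then have p1: "0 < (1 + M / K)^2" by simp
    have p2: "0 < N * (N + 2) / (K * (K + 1))" using K1 N1 by simp
    show ?thesis unfolding E1 using E2 p1 p2 by (metis ln_le_cancel_iff)
  qed
  then have "2 * ln (1 + M / K) \<le> b + b2 - a - a1"
    using K1 M0 by (simp add: ln_realpow)
  moreover have "M / K * L \<le> ln (1 + M / K)"
    unfolding a_a1_b_b1_b2_L_def using K1 M0 MK by (intro log2_lower) auto
  ultimately have "2 * (M / K) * L \<le> b + b2 - a - a1" by linarith
  then have F3: "2 * (M / K) \<le> (b + b2 - a - a1) / L" using L0 by (simp add: pos_le_divide_eq)
  have "A = ln (1 + 2 / N)" unfolding FA using N1 by (simp add: field_simps)
  moreover have "2 * (2 / N) / (2 + 2 / N) \<le> ln (1 + 2 / N)" using N1 by (intro ln_lower2) auto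
  moreover have "2 * (2 / N) / (2 + 2 / N) = 2 / (N + 1)" using N1 by (simp add: field_simps)
  ultimately have F4: "2 / (N + 1) \<le> A" by simp
  have "b - b1 + a1 - a = ln ((N * (K + 1)) / ((N + 1) * K))"
    using K1 N1 by (simp add: a_a1_b_b1_b2_L_def ln_mult ln_div)
  also have "\<dots> \<le> (N * (K + 1)) / ((N + 1) * K) - 1"
    using K1 N1 by (intro ln_le_minus_one) auto
  also have "\<dots> = M / ((N + 1) * K)"
  proof -
    have d: "(N + 1) * K \<noteq> 0" using K1 N1 by simp
    have "N * (K + 1) - (N + 1) * K = M" by (simp add: N_def algebra_simps)
    moreover have "N * (K + 1) / ((N + 1) * K) - 1 = (N * (K + 1) - (N + 1) * K) / ((N + 1) * K)"
      using d by (simp add: diff_divide_distrib)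
    ultimately show ?thesis by simp
  qed
  finally have F5: "b - b1 + a1 - a \<le> M / ((N + 1) * K)" .
  have P1: "(A - B) \<le> (A - B) * ((a + a1) / L)"
    using F1 F2 mult_left_mono[OF F2, of "A - B"] by simp
  have A0: "0 \<le> A" using F1 B0 by simp
  have P2: "A * (2 * (M / K)) \<le> A * ((b + b2 - a - a1) / L)"
    using mult_left_mono[OF F3 A0] .
  have P3: "2 / (N + 1) * (2 * (M / K)) \<le> A * (2 * (M / K))"
    using mult_right_mono[OF F4, of "2 * (M / K)"] K1 M0 by simp
  have P4: "2 / (N + 1) * (2 * (M / K)) = 4 * (M / ((N + 1) * K))" using N1 K1 by (simp add: field_simps)
  have ID: "(b2^2 - b^2) / L - (a1^2 - a^2) / L = (A - B) * ((a + a1) / L) + A * ((b + b2 - a - a1) / L)"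
    unfolding A_B_def using L0 by (simp add: power2_eq_square field_simps)
  have main: "b2 - b1 \<le> (3 * A + (b2^2 - b^2) / L - 3 * B - (a1^2 - a^2) / L) / 4"
  proof -
    have gen: "\<And>X1 X2 Y P Q D1 D2. A - B \<le> X1 \<Longrightarrow> Y \<le> X2 \<Longrightarrow> P \<le> Y \<Longrightarrow> P = 4 * Q
       \<Longrightarrow> D1 - D2 = X1 + X2 \<Longrightarrow> b - b1 + a1 - a \<le> Q \<Longrightarrow> b2 - b1 \<le> (3 * A + D1 - 3 * B - D2) / 4"
      unfolding A_B_def by (simp add: field_simps)
    show ?thesis using gen[OF P1 P2 P3 P4 ID F5] by simp
  qed
  define qa qa1 qb qb2 where "qa = a^2 / L" "qa1 = a1^2 / L" "qb = b^2 / L" "qb2 = b2^2 / L"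
  have e1: "lh N = (3 * b + qb) / 4" "lh (N + 2) = (3 * b2 + qb2) / 4"
    "lh K = (3 * a + qa) / 4" "lh (K + 1) = (3 * a1 + qa1) / 4"
    unfolding lh_def a_a1_b_b1_b2_L_def qa_qa1_qb_qb2_def by simp_all
  have main2: "b2 - b1 \<le> (3 * A + (qb2 - qb) - 3 * B - (qa1 - qa)) / 4"
    using main unfolding qa_qa1_qb_qb2_def by (simp add: diff_divide_distrib)
  have "ln (N + 2) + lh N + lh (K + 1) \<le> ln (N + 1) + lh (N + 2) + lh K"
    using main2 unfolding e1 A_B_def a_a1_b_b1_b2_L_def(5,4)[symmetric] by (simp add: field_simps)
  then show ?thesis unfolding N_def by (simp add: add.assoc)
qed

lemma hh_pos: "x > 0 \<Longrightarrow> hh x > 0"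
  by (simp add: hh_exp)

lemma core_hh:
  fixes k m :: nat
  assumes "1 \<le> k" "m \<le> k"
  shows "4 * (real k + 1) * (real m + 1) * hh (real k + real m) * hh (real k + 1)
     \<le> (real k + real m + 2) * (real k + real m + 1) * hh (real k + real m + 2) * hh (real k)"
proof -
  define K M where "K = real k" "M = real m"
  have K1: "1 \<le> K" and M0: "0 \<le> M" and MK: "M \<le> K" using assms by (auto simp: K_M_def)
  have "exp (ln (K + M + 2) + lh (K + M) + lh (K + 1)) \<le> exp (ln (K + M + 1) + lh (K + M + 2) + lh K)"
    using core_ln[OF K1 M0 MK] by simp
  then have c: "(K + M + 2) * hh (K + M) * hh (K + 1) \<le> (K + M + 1) * hh (K + M + 2) * hh K"
    using K1 M0 by (simp add: exp_add hh_exp)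
  have "4 * (K + 1) * (M + 1) \<le> (K + M + 2) * (K + M + 2)"
  proof -
    have "0 \<le> (K - M)^2" by simp
    then show ?thesis by (simp add: power2_eq_square algebra_simps)
  qed
  then have "4 * (K + 1) * (M + 1) * (hh (K + M) * hh (K + 1)) \<le> (K + M + 2) * (K + M + 2) * (hh (K + M) * hh (K + 1))"
    using K1 M0 by (intro mult_right_mono) (auto intro!: mult_nonneg_nonneg less_imp_le[OF hh_pos])
  also have "\<dots> = (K + M + 2) * ((K + M + 2) * hh (K + M) * hh (K + 1))" by (simp add: algebra_simps)
  also have "\<dots> \<le> (K + M + 2) * ((K + M + 1) * hh (K + M + 2) * hh K)"
    using c K1 M0 by (intro mult_left_mono) auto
  finally show ?thesis unfolding K_M_def by (simp add: algebra_simps)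
qed

lemma hh_1: "hh 1 = 1" by (simp add: hh_def)
lemma hh_2: "hh 2 = 2" by (simp add: hh_def)

lemma keyP:
  fixes m :: nat
  shows "\<And>k. 1 \<le> k \<Longrightarrow> m \<le> k \<Longrightarrow> 4 ^ m * hh (real k) * fact k * fact m \<le> fact (k + m) * hh (real (k + m))"
proof (induction m)
  case 0
  then show ?case by simp
next
  case (Suc m)
  show ?case
  proof (cases "k = 1")
    case True
    then have "m = 0" using Suc.prems by simp
    then show ?thesis using True by (simp add: hh_1 hh_2 numeral_2_eq_2[symmetric])
  next
    case False
    define j where "j = k - 1"
    have j: "k = j + 1" "1 \<le> j" "m \<le> j" using False Suc.prems by (auto simp: j_def)
    have IH: "4 ^ m * hh (real j) * fact j * fact m \<le> fact (j + m) * hh (real (j + m))"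
      using Suc.IH[OF j(2,3)] .
    have C: "4 * (real j + 1) * (real m + 1) * hh (real j + real m) * hh (real j + 1)
     \<le> (real j + real m + 2) * (real j + real m + 1) * hh (real j + real m + 2) * hh (real j)"
      using core_hh[OF j(2,3)] .
    have hj: "hh (real j) > 0" using j by (intro hh_pos) simp
    have hj1: "hh (real j + 1) > 0" by (intro hh_pos) simp
    have hjm: "hh (real j + real m) > 0" using j by (intro hh_pos) simp
    define X :: real where "X = 4 ^ m * fact j * fact m"
    define Y :: real where "Y = fact (j + m)"
    have X0: "X \<ge> 0" "Y \<ge> 0" by (auto simp: X_def Y_def)
    have IH': "X * hh (real j) \<le> Y * hh (real j + real m)" using IH by (simp add: X_def Y_def algebra_simps)
    have "4 ^ Suc m * hh (real k) * fact k * fact (Suc m)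
        = (4 * (real j + 1) * (real m + 1) * hh (real j + 1)) * X"
      by (simp add: j X_def algebra_simps)
    also have "\<dots> * hh (real j) \<le> (4 * (real j + 1) * (real m + 1) * hh (real j + 1)) * (Y * hh (real j + real m))"
      using IH' hj1 by (subst mult.assoc, intro mult_left_mono) auto
    also have "\<dots> = Y * (4 * (real j + 1) * (real m + 1) * hh (real j + real m) * hh (real j + 1))"
      by (simp add: algebra_simps)
    also have "\<dots> \<le> Y * ((real j + real m + 2) * (real j + real m + 1) * hh (real j + real m + 2) * hh (real j))"
      using C X0 by (intro mult_left_mono) auto
    also have "\<dots> = (fact (k + Suc m) * hh (real (k + Suc m))) * hh (real j)"
      by (simp add: Y_def j algebra_simps fact_Suc add_ac)
    finally show ?thesis using hj by simp
  qed
qed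

definition FF :: "nat \<Rightarrow> real" where
  "FF n = fact n * 4 powr (1 - real n) * hh (real n)"

lemma FF_step:
  fixes k m :: nat
  assumes "1 \<le> k" "m \<le> k"
  shows "FF k * fact m \<le> FF (k + m)"
proof -
  have P: "4 ^ m * hh (real k) * fact k * fact m \<le> fact (k + m) * hh (real (k + m))"
    using keyP assms by blast
  have e: "(4::real) ^ m * 4 powr (1 - real (k + m)) = 4 powr (1 - real k)"
    by (simp add: powr_realpow[symmetric] powr_add[symmetric])
  have "FF k * fact m = (4 ^ m * hh (real k) * fact k * fact m) * 4 powr (1 - real (k + m))"
    unfolding FF_def e[symmetric] by (simp add: algebra_simps)
  also have "\<dots> \<le> (fact (k + m) * hh (real (k + m))) * 4 powr (1 - real (k + m))"
    using P by (intro mult_right_mono) auto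
  also have "\<dots> = FF (k + m)" unfolding FF_def by (simp add: algebra_simps)
  finally show ?thesis .
qed

lemma lang_Concat_image: "lang (Concat r s) = (\<lambda>(u, v). u @ v) ` (lang r \<times> lang s)"
  by auto

lemma lang_finite: "finite (lang r)"
  by (induction r) (auto simp: lang_Concat_image simp del: lang.simps(4))

lemma lang_nonempty: "lang r \<noteq> {}"
  by (induction r) auto

lemma deg_hom: assumes "homogeneous r" "w \<in> lang r" shows "length w = deg r"
proof -
  have "(SOME w. w \<in> lang r) \<in> lang r" using assms(2) by (rule someI)
  then show ?thesis using assms unfolding deg_def homogeneous_def by blast
qed

lemma lp_nonempty_word: "log_product B \<Longrightarrow> w \<in> lang B \<Longrightarrow> w \<noteq> []"
  by (induction B arbitrary: w rule: log_product.induct) auto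

lemma card_concat_le: "card (lang (Concat r s)) \<le> card (lang r) * card (lang s)"
proof -
  have "card (lang (Concat r s)) \<le> card (lang r \<times> lang s)"
    unfolding lang_Concat_image by (rule card_image_le) (simp add: lang_finite)
  then show ?thesis by (simp add: card_cartesian_product)
qed

lemma concat_split:
  assumes "lang (Concat X Y) \<subseteq> permutations_of_set S"
  obtains SX SY where "lang X \<subseteq> permutations_of_set SX" "lang Y \<subseteq> permutations_of_set SY"
    "card SX + card SY = card S" "finite SX" "finite SY"
    "\<And>u. u \<in> lang X \<Longrightarrow> length u = card SX" "\<And>v. v \<in> lang Y \<Longrightarrow> length v = card SY"
proof -
  obtain u0 where u0: "u0 \<in> lang X" using lang_nonempty by blast
  obtain v0 where v0: "v0 \<in> lang Y" using lang_nonempty by blast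
  have mem: "u @ v \<in> permutations_of_set S" if "u \<in> lang X" "v \<in> lang Y" for u v
    using assms that by auto
  have X: "u \<in> permutations_of_set (set u0)" if "u \<in> lang X" for u
  proof -
    have a: "set u \<union> set v0 = S" "distinct u" "set u \<inter> set v0 = {}"
      using permutations_of_setD[OF mem[OF that v0]] by auto
    have b: "set u0 \<union> set v0 = S" "set u0 \<inter> set v0 = {}"
      using permutations_of_setD[OF mem[OF u0 v0]] by auto
    have "set u = set u0" using a b by blast
    then show ?thesis using a by auto
  qed
  have Y: "v \<in> permutations_of_set (set v0)" if "v \<in> lang Y" for v
  proof -
    have a: "set u0 \<union> set v = S" "distinct v" "set u0 \<inter> set v = {}"
      using permutations_of_setD[OF mem[OF u0 that]] by auto
    have b: "set u0 \<union> set v0 = S" "set u0 \<inter> set v0 = {}"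
      using permutations_of_setD[OF mem[OF u0 v0]] by auto
    have "set v = set v0" using a b by blast
    then show ?thesis using a by auto
  qed
  have "length (u0 @ v0) = card S" using mem[OF u0 v0] by (rule length_finite_permutations_of_set)
  moreover have "length u0 = card (set u0)" "length v0 = card (set v0)"
    using X[OF u0] Y[OF v0] by (auto dest: length_finite_permutations_of_set)
  ultimately have c: "card (set u0) + card (set v0) = card S" by simp
  show ?thesis
    apply (rule that[of "set u0" "set v0"])
    using X Y c by (auto dest: length_finite_permutations_of_set)
qed

lemma card_perm_le: "A \<subseteq> permutations_of_set S \<Longrightarrow> finite S \<Longrightarrow> card A \<le> fact (card S)"
  using card_mono[OF finite_permutations_of_set, of A S] by simp

lemma main_bound:
  "log_product B \<Longrightarrow> lang B \<subseteq> permutations_of_set S \<Longrightarrow> real (card (lang B)) \<le> FF (card S)"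
proof (induction B arbitrary: S rule: log_product.induct)
  case (lit a)
  then have "[a] \<in> permutations_of_set S" by simp
  then have "S = {a}" by (auto dest: permutations_of_setD)
  then show ?case by (simp add: FF_def hh_1)
next
  case (left B1 B2)
  obtain SX SY where s: "lang B1 \<subseteq> permutations_of_set SX" "lang B2 \<subseteq> permutations_of_set SY"
    "card SX + card SY = card S" "finite SX" "finite SY"
    "\<And>u. u \<in> lang B1 \<Longrightarrow> length u = card SX" "\<And>v. v \<in> lang B2 \<Longrightarrow> length v = card SY"
    using concat_split[OF left.prems] by blast
  obtain u0 where u0: "u0 \<in> lang B1" using lang_nonempty by blast
  obtain v0 where v0: "v0 \<in> lang B2" using lang_nonempty by blast
  have k1: "1 \<le> card SX" using s(6)[OF u0] lp_nonempty_word[OF left.hyps(1) u0]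
    by (cases u0) auto
  have mk: "card SY \<le> card SX"
    using s(6)[OF u0] s(7)[OF v0] deg_hom[OF left.hyps(2) u0] deg_hom[OF left.hyps(3) v0] left.hyps(4)
    by simp
  have "real (card (lang (Concat B1 B2))) \<le> real (card (lang B1)) * real (card (lang B2))"
    using card_concat_le by (metis of_nat_le_iff of_nat_mult)
  also have "\<dots> \<le> FF (card SX) * fact (card SY)"
  proof (rule mult_mono)
    show "real (card (lang B1)) \<le> FF (card SX)" using left.IH[OF s(1)] .
    show "real (card (lang B2)) \<le> fact (card SY)"
      using card_perm_le[OF s(2,5)] by (metis of_nat_fact of_nat_le_iff)
    show "0 \<le> FF (card SX)" using left.IH[OF s(1)] by (meson of_nat_0_le_iff order_trans)
  qed simp
  also have "\<dots> \<le> FF (card S)" using FF_step[OF k1 mk] s(3) by simp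
  finally show ?case .
next
  case (right B1 B2)
  obtain SX SY where s: "lang B2 \<subseteq> permutations_of_set SX" "lang B1 \<subseteq> permutations_of_set SY"
    "card SX + card SY = card S" "finite SX" "finite SY"
    "\<And>u. u \<in> lang B2 \<Longrightarrow> length u = card SX" "\<And>v. v \<in> lang B1 \<Longrightarrow> length v = card SY"
    using concat_split[OF right.prems] by blast
  obtain u0 where u0: "u0 \<in> lang B2" using lang_nonempty by blast
  obtain v0 where v0: "v0 \<in> lang B1" using lang_nonempty by blast
  have k1: "1 \<le> card SY" using s(7)[OF v0] lp_nonempty_word[OF right.hyps(1) v0]
    by (cases v0) auto
  have mk: "card SX \<le> card SY"
    using s(6)[OF u0] s(7)[OF v0] deg_hom[OF right.hyps(2) v0] deg_hom[OF right.hyps(3) u0] right.hyps(4)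
    by simp
  have "real (card (lang (Concat B2 B1))) \<le> real (card (lang B1)) * real (card (lang B2))"
    using card_concat_le[of B2 B1] by (metis of_nat_le_iff of_nat_mult mult.commute)
  also have "\<dots> \<le> FF (card SY) * fact (card SX)"
  proof (rule mult_mono)
    show "real (card (lang B1)) \<le> FF (card SY)" using right.IH[OF s(2)] .
    show "real (card (lang B2)) \<le> fact (card SX)"
      using card_perm_le[OF s(1,4)] by (metis of_nat_fact of_nat_le_iff)
    show "0 \<le> FF (card SY)" using right.IH[OF s(2)] by (meson of_nat_0_le_iff order_trans)
  qed simp
  also have "\<dots> \<le> FF (card S)" using FF_step[OF k1 mk] s(3) by (simp add: add.commute)
  finally show ?case .
qed

theorem lemma7p6:
  fixes n :: nat and B :: rexp
  assumes "n \<ge> 1" and "log_product B" and "lang B \<subseteq> perms n"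
  shows "real (card (lang B)) \<le>
           fact n * 4 powr (1 - real n) * real n powr ((3 + log 2 (real n)) / 4)"
proof -
  have "perms n = permutations_of_set {1..n}"
    unfolding perms_def permutations_of_set_def by auto
  then have "real (card (lang B)) \<le> FF (card {1..n})"
    using main_bound[OF assms(2), of "{1..n}"] assms(3) by argo
  then show ?thesis by (simp add: FF_def hh_def)
qed

end
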